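(* Let $p<q$ be coprime positive integers, $m$ a positive integer, $j\in\{3,4\}$ and $R=\mathbb C[X_0,X_1,X_j]$. Define $\mu:\mathbb Z^3\to\mathbb Z^3$, $\mu(d_0,d_1,d_j)=(d_0-pd_1+qd_j,\;d_1-d_j,\;pd_1-qd_j)$ (injective), $\Lambda=\mu(\mathbb Z_{\ge0}^3)$, and for $\lambda\in\Lambda$ let $f_\lambda=X_0^{d_0}X_1^{d_1}X_j^{d_j}$ where $\mu(d_0,d_1,d_j)=\lambda$. For $(n,c)$ with $(n,c,\omega)\in\Lambda$ for some $\omega$, let $\omega_{(n,c)}=\min\{\omega:(n,c,\omega)\in\Lambda\}$. For $(n,d)\in\mathbb Z\times\mathbb Z/m\mathbb Z$ let $\Lambda_{(n,d)}=\{(n,c,\omega)\in\Lambda: c\equiv d\pmod m\}$ and $c_{(n,d)}=\min\{c\in\mathbb Z:c\equiv d\pmod m,\ (n,c,\omega)\in\Lambda\text{ for some }\omega\}$. Let $\lambda=(n,c,\omega)\in\Lambda_{(n,d)}$. Then: (i) $f_\lambda\in(X_0^{q-p})$ if and only if $\omega>\omega_{(n,c)}$; (ii) if $m=a(q-p)$ for a positive integer $a$, $\omega=\omega_{(n,c)}$ and $c>c_{(n,d)}$, then $f_\lambda\in(X_1^{aq}X_j^{ap})$.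
   Context: Ideals are taken in $R$. The minima $\omega_{(n,c)}$ and $c_{(n,d)}$ exist (the defining sets are nonempty and bounded below). *)

theory Defs
  imports Complex_Main "HOL-Library.Poly_Mapping" "HOL-Computational_Algebra.Primes" "HOL-Number_Theory.Cong"
begin

(* Polynomials over C in variables X_i (i :: nat): monomials are finitely supported
   exponent vectors nat \<Rightarrow>\<^sub>0 nat, polynomials are finitely supported coefficient maps. *)
type_synonym mpoly = "(nat \<Rightarrow>\<^sub>0 nat) \<Rightarrow>\<^sub>0 complex"

definition Var :: "nat \<Rightarrow> mpoly" where
  "Var i = Poly_Mapping.single (Poly_Mapping.single i 1) 1"

(* C[X_v : v \<in> V] as a subring of the polynomial ring in countably many variables *)
definition polyring :: "nat set \<Rightarrow> mpoly set" where
  "polyring V = {f. \<forall>mon \<in> Poly_Mapping.keys f. Poly_Mapping.keys mon \<subseteq> V}"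

definition pideal :: "mpoly set \<Rightarrow> mpoly \<Rightarrow> mpoly set" where
  "pideal Rg g = {h * g | h. h \<in> Rg}"

definition mu :: "int \<Rightarrow> int \<Rightarrow> int \<times> int \<times> int \<Rightarrow> int \<times> int \<times> int" where
  "mu p q = (\<lambda>(d0, d1, dj). (d0 - p * d1 + q * dj, d1 - dj, p * d1 - q * dj))"

definition Lambda :: "int \<Rightarrow> int \<Rightarrow> (int \<times> int \<times> int) set" where
  "Lambda p q = mu p q ` {(d0, d1, dj). d0 \<ge> 0 \<and> d1 \<ge> 0 \<and> dj \<ge> 0}"

definition flam :: "int \<Rightarrow> int \<Rightarrow> nat \<Rightarrow> int \<times> int \<times> int \<Rightarrow> mpoly" where
  "flam p q j l = (case (THE d. d \<in> {(d0, d1, dj). d0 \<ge> 0 \<and> d1 \<ge> 0 \<and> dj \<ge> 0} \<and> mu p q d = l) of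
     (d0, d1, dj) \<Rightarrow> Var 0 ^ nat d0 * Var 1 ^ nat d1 * Var j ^ nat dj)"

definition omega_min :: "int \<Rightarrow> int \<Rightarrow> int \<Rightarrow> int \<Rightarrow> int" where
  "omega_min p q n c = (LEAST w. (n, c, w) \<in> Lambda p q)"

(* Lambda_(n,d), d \<in> Z/mZ represented by an integer representative *)
definition Lambda_nd :: "int \<Rightarrow> int \<Rightarrow> int \<Rightarrow> int \<Rightarrow> int \<Rightarrow> (int \<times> int \<times> int) set" where
  "Lambda_nd p q m n d = {(n', c, w). (n', c, w) \<in> Lambda p q \<and> n' = n \<and> [c = d] (mod m)}"

definition c_min :: "int \<Rightarrow> int \<Rightarrow> int \<Rightarrow> int \<Rightarrow> int \<Rightarrow> int" where
  "c_min p q m n d = (LEAST c. [c = d] (mod m) \<and> (\<exists>w. (n, c, w) \<in> Lambda p q))"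

end

theory Submission
  imports Defs
begin

lemma Var_pow: "Var i ^ k = Poly_Mapping.single (Poly_Mapping.single i k) 1"
proof (induction k)
  case 0 then show ?case by simp
next
  case (Suc k)
  then show ?case by (simp add: Var_def mult_single single_add[symmetric])
qed

lemma mono_in_pideal:
  assumes "Poly_Mapping.keys s \<subseteq> V"
  shows "Poly_Mapping.single (s + t) (1::complex) \<in> pideal (polyring V) (Poly_Mapping.single t 1)"
  unfolding pideal_def polyring_def
  using assms by (intro CollectI exI[of _ "Poly_Mapping.single s 1"]) (simp add: mult_single)

lemma mono_not_in_pideal:
  assumes "Poly_Mapping.single u (1::complex) \<in> pideal Rg (Poly_Mapping.single t 1)"
  shows "\<exists>s. u = s + t"
proof -
  obtain h where h: "Poly_Mapping.single u (1::complex) = h * Poly_Mapping.single t 1"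
    using assms unfolding pideal_def by blast
  have "u \<in> Poly_Mapping.keys (h * Poly_Mapping.single t (1::complex))"
    by (simp flip: h)
  then show ?thesis using keys_mult[of h "Poly_Mapping.single t (1::complex)"] by auto
qed

lemma mem_Lambda:
  "(n, c, w) \<in> Lambda p q \<longleftrightarrow> (\<exists>e. 0 \<le> e \<and> 0 \<le> c + e \<and> 0 \<le> n + w \<and> w = p*c - (q-p)*e)"
proof
  assume "(n, c, w) \<in> Lambda p q"
  then obtain d0 d1 dj where "d0 \<ge> 0" "d1 \<ge> 0" "dj \<ge> 0" "mu p q (d0, d1, dj) = (n, c, w)"
    unfolding Lambda_def by auto
  then show "\<exists>e. 0 \<le> e \<and> 0 \<le> c + e \<and> 0 \<le> n + w \<and> w = p*c - (q-p)*e"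
    unfolding mu_def by (intro exI[of _ dj]) (auto simp: algebra_simps)
next
  assume "\<exists>e. 0 \<le> e \<and> 0 \<le> c + e \<and> 0 \<le> n + w \<and> w = p*c - (q-p)*e"
  then obtain e where e: "0 \<le> e" "0 \<le> c + e" "0 \<le> n + w" "w = p*c - (q-p)*e" by auto
  have "mu p q (n + w, c + e, e) = (n, c, w)" using e(4) unfolding mu_def by (simp add: algebra_simps)
  then show "(n, c, w) \<in> Lambda p q" unfolding Lambda_def using e
    by (intro image_eqI[of _ _ "(n + w, c + e, e)"]) auto
qed

lemma valid_c:
  assumes "0 < p" "p < q"
  shows "(\<exists>w. (n, c, w) \<in> Lambda p q) \<longleftrightarrow> (-n \<le> p*c \<and> -n \<le> q*c)"
proof
  assume "\<exists>w. (n, c, w) \<in> Lambda p q"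
  then obtain w e where e: "0 \<le> e" "0 \<le> c + e" "0 \<le> n + w" "w = p*c - (q-p)*e"
    by (auto simp: mem_Lambda)
  have "(q-p)*e \<ge> 0" using e assms by simp
  moreover have "(q-p)*(c+e) \<ge> 0" using e assms by simp
  ultimately show "-n \<le> p*c \<and> -n \<le> q*c" using e by (auto simp: algebra_simps)
next
  assume h: "-n \<le> p*c \<and> -n \<le> q*c"
  show "\<exists>w. (n, c, w) \<in> Lambda p q"
  proof (cases "c \<ge> 0")
    case True
    then show ?thesis using h by (intro exI[of _ "p*c"]) (auto simp: mem_Lambda intro!: exI[of _ 0])
  next
    case False
    then show ?thesis using h by (intro exI[of _ "q*c"]) (auto simp: mem_Lambda algebra_simps intro!: exI[of _ "-c"])
  qed
qed

theorem lemma4p19: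
  fixes p q m n c w d :: int and j :: nat
  assumes "0 < p" and "p < q" and "coprime p q" and "0 < m" and "j \<in> {3, 4}"
    and "(n, c, w) \<in> Lambda_nd p q m n d"
  shows "(flam p q j (n, c, w) \<in> pideal (polyring {0, 1, j}) (Var 0 ^ nat (q - p))
           \<longleftrightarrow> w > omega_min p q n c)
      \<and> (\<forall>a. 0 < a \<longrightarrow> m = a * (q - p) \<longrightarrow> w = omega_min p q n c \<longrightarrow> c > c_min p q m n d \<longrightarrow>
           flam p q j (n, c, w) \<in> pideal (polyring {0, 1, j}) (Var 1 ^ nat (a * q) * Var j ^ nat (a * p)))"
proof -
  have j0: "j \<noteq> 0" and j1: "j \<noteq> 1" using assms(5) by auto
  have L: "(n, c, w) \<in> Lambda p q" and cong: "[c = d] (mod m)"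
    using assms(6) unfolding Lambda_nd_def by auto
  then obtain e where e: "0 \<le> e" "0 \<le> c + e" "0 \<le> n + w" "w = p*c - (q-p)*e"
    by (auto simp: mem_Lambda)
  have qp: "q - p > 0" using assms by simp
  have inj: "x = (n + w, c + e, e)"
    if "x \<in> {(d0, d1, dj). d0 \<ge> 0 \<and> d1 \<ge> 0 \<and> dj \<ge> 0} \<and> mu p q x = (n, c, w)" for x
  proof -
    obtain x0 x1 xj where x: "x = (x0, x1, xj)" by (cases x) auto
    have m1: "x0 - p*x1 + q*xj = n" "x1 - xj = c" "p*x1 - q*xj = w"
      using that unfolding x mu_def by auto
    have "x1 = c + xj" using m1 by simp
    then have "p*c - (q-p)*xj = w" using m1(3) by (simp add: algebra_simps)
    then have "(q-p)*xj = (q-p)*e" using e(4) by simp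
    then have "xj = e" using qp by simp
    then show ?thesis using m1 x by auto
  qed
  have "(THE x. x \<in> {(d0, d1, dj). d0 \<ge> 0 \<and> d1 \<ge> 0 \<and> dj \<ge> 0} \<and> mu p q x = (n, c, w))
        = (n + w, c + e, e)"
    apply (rule the_equality)
    subgoal using e unfolding mu_def by (auto simp: algebra_simps)
    subgoal using inj by blast
    done
  then have flam: "flam p q j (n, c, w) = Poly_Mapping.single
      (Poly_Mapping.single 0 (nat (n+w)) + Poly_Mapping.single 1 (nat (c+e)) + Poly_Mapping.single j (nat e)) 1"
    unfolding flam_def by (simp add: Var_pow mult_single)
  define M where "M = Poly_Mapping.single 0 (nat (n+w)) + Poly_Mapping.single 1 (nat (c+e)) + Poly_Mapping.single j (nat e)"
  have keysV: "Poly_Mapping.keys (Poly_Mapping.single 0 x + Poly_Mapping.single 1 y + Poly_Mapping.single j z) \<subseteq> {0,1,j}"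
    for x y z :: nat
    using keys_add[of "Poly_Mapping.single 0 x + Poly_Mapping.single 1 y" "Poly_Mapping.single j z"]
      keys_add[of "Poly_Mapping.single 0 x" "Poly_Mapping.single (1::nat) y"]
    by (auto split: if_splits)
  define k where "k = (n + w) div (q - p)"
  have k0: "k \<ge> 0" using e(3) qp unfolding k_def by (simp add: pos_imp_zdiv_nonneg_iff)
  have om: "omega_min p q n c = w - (q-p)*k"
    unfolding omega_min_def
  proof (rule Least_equality)
    have "0 \<le> (n + w) mod (q-p)" using qp by simp
    moreover have "(n + w) mod (q-p) = n + (w - (q-p)*k)"
      unfolding k_def by (simp add: algebra_simps minus_div_mult_eq_mod[symmetric])
    ultimately have nn: "0 \<le> n + (w - (q-p)*k)" by simp
    have "w - (q-p)*k = p*c - (q-p)*(e+k)" using e(4) by (simp add: algebra_simps)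
    then show "(n, c, w - (q-p)*k) \<in> Lambda p q"
      using e k0 nn unfolding mem_Lambda
      by (intro exI[of _ "e + k"]) auto
  next
    fix y assume "(n, c, y) \<in> Lambda p q"
    then obtain e' where e': "0 \<le> e'" "0 \<le> c + e'" "0 \<le> n + y" "y = p*c - (q-p)*e'"
      by (auto simp: mem_Lambda)
    have r: "(n + w) mod (q-p) = n + (w - (q-p)*k)"
      unfolding k_def by (simp add: algebra_simps minus_div_mult_eq_mod[symmetric])
    have lt: "(n + w) mod (q-p) < q - p" using qp by simp
    show "w - (q-p)*k \<le> y"
    proof (rule ccontr)
      assume "\<not> ?thesis"
      then have "y < w - (q-p)*k" by simp
      moreover have "w - (q-p)*k - y = (q-p)*(e' - e - k)" using e(4) e'(4) by (simp add: algebra_simps)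
      ultimately have "(q-p)*(e' - e - k) > 0" by simp
      then have "e' - e - k \<ge> 1" using qp by (simp add: zero_less_mult_iff)
      then have "(q-p)*(e' - e - k) \<ge> (q-p)*1" using qp by (intro mult_left_mono) auto
      then have "(q-p)*(e' - e - k) \<ge> q-p" by simp
      then show False using r lt e' \<open>w - (q-p)*k - y = (q-p)*(e' - e - k)\<close> by linarith
    qed
  qed
  have part1: "flam p q j (n, c, w) \<in> pideal (polyring {0, 1, j}) (Var 0 ^ nat (q - p))
           \<longleftrightarrow> w > omega_min p q n c"
  proof
    assume "flam p q j (n, c, w) \<in> pideal (polyring {0, 1, j}) (Var 0 ^ nat (q - p))"
    then obtain s where "M = s + Poly_Mapping.single 0 (nat (q-p))"
      using mono_not_in_pideal[of M] flam unfolding M_def[symmetric] Var_pow by auto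
    then have "Poly_Mapping.lookup M 0 = Poly_Mapping.lookup s 0 + nat (q-p)" by (simp only: Poly_Mapping.lookup_add Poly_Mapping.lookup_single_eq)
    moreover have "Poly_Mapping.lookup M 0 = nat (n+w)" unfolding M_def using j0
      by (simp add: Poly_Mapping.lookup_add Poly_Mapping.lookup_single)
    ultimately have "n + w \<ge> q - p" using qp by linarith
    then have "(q-p) div (q-p) \<le> k" unfolding k_def using qp by (intro zdiv_mono1) auto
    then have "k \<ge> 1" using qp by simp
    then show "w > omega_min p q n c" unfolding om using qp by (smt (verit) mult_le_cancel_left1)
  next
    assume "w > omega_min p q n c"
    then have "k > 0" unfolding om using qp by (simp add: zero_less_mult_iff)
    then have "n + w \<ge> q - p" unfolding k_def using qp e(3)
      by (metis div_pos_pos_trivial linorder_not_le less_irrefl)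
    then have "M = (Poly_Mapping.single 0 (nat (n+w) - nat (q-p)) + Poly_Mapping.single 1 (nat (c+e)) + Poly_Mapping.single j (nat e))
      + Poly_Mapping.single 0 (nat (q-p))"
    proof -
      have "nat (n+w) = (nat (n+w) - nat (q-p)) + nat (q-p)" using \<open>n + w \<ge> q - p\<close> by simp
      then have eq: "Poly_Mapping.single (0::nat) (nat (n+w)) = Poly_Mapping.single 0 (nat (n+w) - nat (q-p)) + Poly_Mapping.single 0 (nat (q-p))"
        by (metis single_add)
      show ?thesis unfolding M_def eq by (simp add: add_ac)
    qed
    then show "flam p q j (n, c, w) \<in> pideal (polyring {0, 1, j}) (Var 0 ^ nat (q - p))"
      unfolding flam M_def[symmetric] Var_pow using mono_in_pideal[OF keysV] by simp
  qed
  have part2: "flam p q j (n, c, w) \<in> pideal (polyring {0, 1, j}) (Var 1 ^ nat (a * q) * Var j ^ nat (a * p))"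
    if a: "0 < a" "m = a * (q - p)" "w = omega_min p q n c" "c > c_min p q m n d" for a
  proof -
    have k00: "k = 0" using a(3) om qp by simp
    have lt: "n + w < q - p"
    proof (rule ccontr)
      assume "\<not> ?thesis"
      then have "(q-p) div (q-p) \<le> k" unfolding k_def using qp by (intro zdiv_mono1) auto
      then show False using qp k00 by simp
    qed
    have valid: "-n \<le> p*(c-m) \<and> -n \<le> q*(c-m)"
    proof (rule ccontr)
      assume nv: "\<not> ?thesis"
      have "c_min p q m n d = c"
        unfolding c_min_def
      proof (rule Least_equality)
        show "[c = d] (mod m) \<and> (\<exists>w. (n, c, w) \<in> Lambda p q)" using cong L by auto
      next
        fix y assume y: "[y = d] (mod m) \<and> (\<exists>w. (n, y, w) \<in> Lambda p q)"
        show "c \<le> y"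
        proof (rule ccontr)
          assume "\<not> c \<le> y"
          have "[y = c] (mod m)" using y cong by (metis cong_sym cong_trans)
          then obtain t where t: "c - y = m * t" by (metis cong_iff_dvd_diff cong_sym dvd_def)
          have "t > 0" using t \<open>\<not> c \<le> y\<close> assms(4) by (smt (verit) mult_le_0_iff)
          then have "m*t \<ge> m*1" using assms(4) by (intro mult_left_mono) auto
          then have "y \<le> c - m" using t by simp
          have "-n \<le> p*y \<and> -n \<le> q*y" using y valid_c[OF assms(1,2)] by blast
          moreover have "p*y \<le> p*(c-m)" "q*y \<le> q*(c-m)" using \<open>y \<le> c - m\<close> assms(1,2)
            by (intro mult_left_mono; simp)+
          ultimately show False using nv by linarith
        qed
      qed
      then show False using a(4) by simp
    qed
    have h1: "p*(c-m) = p*c - (q-p)*(a*p)" by (simp add: a(2) algebra_simps)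
    have h2: "(q-p)*(e - a*p + 1) = (q-p)*e - (q-p)*(a*p) + (q-p)" by (simp add: algebra_simps)
    have "(q-p)*(e - a*p + 1) > 0"
      using valid lt e(4) h1 h2 by linarith
    then have ej: "e \<ge> a*p" using qp by (simp add: zero_less_mult_iff)
    have h3: "q*(c-m) = q*c - (q-p)*(a*q)" by (simp add: a(2) algebra_simps)
    have h4: "(q-p)*(c + e - a*q + 1) = (q-p)*(c+e) - (q-p)*(a*q) + (q-p)" by (simp add: algebra_simps)
    have h5: "w = q*c - (q-p)*(c+e)" using e(4) by (simp add: algebra_simps)
    have "(q-p)*(c + e - a*q + 1) > 0"
      using valid lt h5 h3 h4 by linarith
    then have e1: "c + e \<ge> a*q" using qp by (simp add: zero_less_mult_iff)
    have ap: "a*p \<ge> 0" "a*q \<ge> 0" using a(1) assms(1,2) by simp_all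
    have "M = (Poly_Mapping.single 0 (nat (n+w)) + Poly_Mapping.single 1 (nat (c+e) - nat (a*q)) + Poly_Mapping.single j (nat e - nat (a*p)))
      + (Poly_Mapping.single 1 (nat (a*q)) + Poly_Mapping.single j (nat (a*p)))"
    proof -
      have "nat (c+e) = (nat (c+e) - nat (a*q)) + nat (a*q)" using e1 ap by simp
      then have eq1: "Poly_Mapping.single (1::nat) (nat (c+e)) = Poly_Mapping.single 1 (nat (c+e) - nat (a*q)) + Poly_Mapping.single 1 (nat (a*q))"
        by (metis single_add)
      have "nat e = (nat e - nat (a*p)) + nat (a*p)" using ej ap by simp
      then have eq2: "Poly_Mapping.single j (nat e) = Poly_Mapping.single j (nat e - nat (a*p)) + Poly_Mapping.single j (nat (a*p))"
        by (metis single_add)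
      show ?thesis unfolding M_def eq1 eq2 by (simp add: add_ac)
    qed
    moreover have "Var 1 ^ nat (a * q) * Var j ^ nat (a * p) =
        Poly_Mapping.single (Poly_Mapping.single 1 (nat (a*q)) + Poly_Mapping.single j (nat (a*p))) 1"
      by (simp add: Var_pow mult_single)
    ultimately show ?thesis
      unfolding flam M_def[symmetric] using mono_in_pideal[OF keysV] by simp
  qed
  show ?thesis using part1 part2 by blast
qed

end
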